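(* For $M\in\frac12\mathbb{Z}_{>0}$ and $s\in\frac12\mathbb{Z}$, $$2\tilde\Psi^{[M;s]}(2\tau,z_1,z_2,t)=\tilde\Psi^{[2M;2s]}\Big(\tau,\frac{z_1}2,\frac{z_2}2,\frac t2\Big)+e^{-2\pi is}\,\tilde\Psi^{[2M;2s]}\Big(\tau,\frac{z_1+1}2,\frac{z_2-1}2,\frac t2\Big).$$
   Context: Let $\operatorname{Im}\tau>0$, $q=e^{2\pi i\tau}$. For $m\in\frac12\mathbb{Z}_{>0}$, $s,j\in\frac12\mathbb{Z}$ define $\Phi^{+[m;s]}(\tau,z_1,z_2)=\sum_{n\in\mathbb{Z}}\frac{e^{2\pi imn(z_1+z_2)+2\pi isz_1}q^{mn^2+sn}}{1-e^{2\pi iz_1}q^n}$, $\Theta^+_{j,m}(\tau,z)=\sum_{n\in\mathbb{Z}}e^{2\pi imz(n+\frac j{2m})}q^{m(n+\frac j{2m})^2}$, $R^+_{j,m}(\tau,z)=\sum_{n\in\frac12\mathbb{Z},\,n\equiv j\bmod 2m}\{\operatorname{sign}(n-\frac12-j+2m)-E(\psi_{m,n}(\tau,z))\}e^{-\frac{\pi in^2}{2m}\tau+2\pi inz}$, with $E(x)=2\int_0^xe^{-\pi u^2}du$, $\psi_{m,n}(\tau,z)=(n-2m\frac{\operatorname{Im}z}{\operatorname{Im}\tau})\sqrt{\frac{\operatorname{Im}\tau}m}$; $\tilde\Phi^{+[m;s]}=\Phi^{+[m;s]}-\frac12\sum_{j\in s+\mathbb{Z},\,s\le j<s+2m}R^+_{j,m}(\tau,\frac{z_1-z_2}2)\Theta^+_{j,m}(\tau,z_1+z_2)$.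 Finally $\tilde\Psi^{[M;s]}(\tau,z_1,z_2,t)=e^{-2\pi iMt}\big(\tilde\Phi^{+[M;s]}(\tau,z_1,z_2)-\tilde\Phi^{+[M;s]}(\tau,-z_2,-z_1)\big)$. *)

theory Defs
  imports "HOL-Analysis.Analysis"
begin

text \<open>e(x) = exp(2 pi i x); q^r = e(tau r) for real r.\<close>
definition ee :: "complex \<Rightarrow> complex" where
  "ee x = exp (2 * complex_of_real pi * \<i> * x)"

definition Erf_E :: "real \<Rightarrow> real" where
  "Erf_E x = (if 0 \<le> x then 2 * integral {0..x} (\<lambda>u. exp (- pi * u\<^sup>2))
              else - 2 * integral {x..0} (\<lambda>u. exp (- pi * u\<^sup>2)))"

definition psi_mn :: "real \<Rightarrow> real \<Rightarrow> complex \<Rightarrow> complex \<Rightarrow> real" where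
  "psi_mn m n \<tau> z = (n - 2 * m * Im z / Im \<tau>) * sqrt (Im \<tau> / m)"

definition PhiPlus :: "real \<Rightarrow> real \<Rightarrow> complex \<Rightarrow> complex \<Rightarrow> complex \<Rightarrow> complex" where
  "PhiPlus m s \<tau> z1 z2 =
     (\<Sum>\<^sub>\<infinity>n\<in>(UNIV::int set).
        ee (of_real m * of_int n * (z1 + z2) + of_real s * z1)
        * ee (\<tau> * of_real (m * of_int n ^ 2 + s * of_int n))
        / (1 - ee z1 * ee (\<tau> * of_int n)))"

definition ThetaPlus :: "real \<Rightarrow> real \<Rightarrow> complex \<Rightarrow> complex \<Rightarrow> complex" where
  "ThetaPlus j m \<tau> z =
     (\<Sum>\<^sub>\<infinity>n\<in>(UNIV::int set).
        ee (of_real m * z * of_real (of_int n + j / (2 * m)))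
        * ee (\<tau> * of_real (m * (of_int n + j / (2 * m))\<^sup>2)))"

text \<open>Sum over n in (1/2)Z with n = j mod 2m, i.e. n in j + 2m Z.\<close>
definition RPlus :: "real \<Rightarrow> real \<Rightarrow> complex \<Rightarrow> complex \<Rightarrow> complex" where
  "RPlus j m \<tau> z =
     (\<Sum>\<^sub>\<infinity>n\<in>{n::real. \<exists>k::int. n = j + 2 * m * of_int k}.
        of_real (sgn (n - 1/2 - j + 2 * m) - Erf_E (psi_mn m n \<tau> z))
        * exp (- complex_of_real pi * \<i> * of_real (n\<^sup>2) * \<tau> / of_real (2 * m)
               + 2 * complex_of_real pi * \<i> * of_real n * z))"

definition PhiPlusTilde :: "real \<Rightarrow> real \<Rightarrow> complex \<Rightarrow> complex \<Rightarrow> complex \<Rightarrow> complex" where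
  "PhiPlusTilde m s \<tau> z1 z2 =
     PhiPlus m s \<tau> z1 z2
     - 1/2 * (\<Sum>j\<in>{j::real. (\<exists>k::int. j = s + of_int k) \<and> s \<le> j \<and> j < s + 2 * m}.
               RPlus j m \<tau> ((z1 - z2) / 2) * ThetaPlus j m \<tau> (z1 + z2))"

definition PsiTilde :: "real \<Rightarrow> real \<Rightarrow> complex \<Rightarrow> complex \<Rightarrow> complex \<Rightarrow> complex \<Rightarrow> complex" where
  "PsiTilde M s \<tau> z1 z2 t =
     exp (- 2 * complex_of_real pi * \<i> * of_real M * t)
     * (PhiPlusTilde M s \<tau> z1 z2 - PhiPlusTilde M s \<tau> (- z2) (- z1))"

end

theory Submission
  imports Defs "HOL-Real_Asymp.Real_Asymp"
begin


lemma exp_2pi_int: "exp (2 * complex_of_real pi * \<i> * of_int t) = 1"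
  using exp_integer_2pi[of "of_int t"] by (simp add: algebra_simps)

lemma norm_ee: "norm (ee x) = exp (-2*pi*Im x)"
  unfolding ee_def by (simp add: norm_exp_eq_Re)

lemma ee_nonzero: "ee x \<noteq> 0" unfolding ee_def by simp

lemma gauss_bound:
  fixes a b c x :: real
  assumes "a > 0" "x\<^sup>2 \<ge> \<bar>x\<bar>"
  shows "exp(-2*pi*(a*x\<^sup>2 + b*x + c)) \<le> exp(-2*pi*c + pi*b\<^sup>2/a) * exp(-pi*a*\<bar>x\<bar>)"
proof -
  have h1: "a*(x + b/a)\<^sup>2 \<ge> 0" using assms by simp
  have h2: "a*x\<^sup>2 \<ge> a*\<bar>x\<bar>" using assms by (simp add: mult_left_mono)
  have e: "a*(x + b/a)\<^sup>2 = a*x\<^sup>2 + 2*(b*x) + b\<^sup>2/a" using assms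
    by (simp add: power2_eq_square field_simps)
  have key: "\<And>X Y Z W::real. 0 \<le> X + 2*Y + Z \<Longrightarrow> W \<le> X \<Longrightarrow> W - Z \<le> 2*(X+Y)" by argo
  have k: "a*\<bar>x\<bar> - b\<^sup>2/a \<le> 2*(a*x\<^sup>2 + b*x)"
    by (rule key) (use h1 h2 e in auto)
  have "pi * (a*\<bar>x\<bar> - b\<^sup>2/a) \<le> pi * (2*(a*x\<^sup>2 + b*x))"
    using k by (intro mult_left_mono) auto
  hence "-2*pi*(a*x\<^sup>2 + b*x + c) \<le> -2*pi*c + pi*b\<^sup>2/a + (-pi*a*\<bar>x\<bar>)"
    by (simp add: algebra_simps)
  thus ?thesis by (simp add: exp_add[symmetric])
qed

lemma ee_add: "ee (x + y) = ee x * ee y"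
  unfolding ee_def by (simp add: distrib_left exp_add)

lemma num_norm:
  fixes m s :: real and u1 u2 \<tau> :: complex and n :: int
  shows "norm (ee (of_real m * of_int n * (u1 + u2) + of_real s * u1)
        * ee (\<tau> * of_real (m * of_int n ^ 2 + s * of_int n)))
     = exp(-2*pi*((m*Im \<tau>)*(real_of_int n)\<^sup>2 + (m*Im(u1+u2) + s*Im \<tau>)*real_of_int n + s*Im u1))"
  by (simp add: norm_mult norm_ee exp_add[symmetric] algebra_simps power2_eq_square)

lemma denom_ev_pos:
  fixes w \<tau> :: complex assumes "Im \<tau> > 0"
  shows "eventually (\<lambda>k::nat. norm (1 - ee w * ee (\<tau> * of_int (int k))) \<ge> 1/2) at_top"
proof -
  have A: "exp(-2*pi*Im w) > 0" by simp
  have "eventually (\<lambda>k::nat. exp(-2*pi*Im w) * exp(-2*pi*Im \<tau>*real k) \<le> 1/2) at_top"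
    using A assms by real_asymp
  thus ?thesis
  proof eventually_elim
    case (elim k)
    have "norm (ee w * ee (\<tau> * of_int (int k))) = exp(-2*pi*Im w) * exp(-2*pi*Im \<tau>*real k)"
      by (simp add: norm_mult norm_ee)
    moreover have "norm (1::complex) - norm (ee w * ee (\<tau> * of_int (int k))) \<le> norm (1 - ee w * ee (\<tau> * of_int (int k)))"
      by (rule norm_triangle_ineq2)
    ultimately show ?case using elim by simp
  qed
qed

lemma denom_ev_neg:
  fixes w \<tau> :: complex assumes "Im \<tau> > 0"
  shows "eventually (\<lambda>k::nat. norm (1 - ee w * ee (\<tau> * of_int (- int (Suc k)))) \<ge> 1/2) at_top"
proof -
  have A: "exp(-2*pi*Im w) > 0" by simp
  have "eventually (\<lambda>k::nat. exp(-2*pi*Im w) * exp(2*pi*Im \<tau>*(real k + 1)) \<ge> 3/2) at_top"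
    using A assms by real_asymp
  thus ?thesis
  proof eventually_elim
    case (elim k)
    have "norm (ee w * ee (\<tau> * of_int (- int (Suc k)))) = exp(-2*pi*Im w) * exp(2*pi*Im \<tau>*(real k + 1))"
      by (simp add: norm_mult norm_ee algebra_simps)
    moreover have "norm (ee w * ee (\<tau> * of_int (- int (Suc k)))) - norm (1::complex) \<le> norm (1 - ee w * ee (\<tau> * of_int (- int (Suc k))))"
      by (metis norm_minus_commute norm_triangle_ineq2)
    ultimately show ?case using elim by (simp add: algebra_simps)
  qed
qed

lemma int_sq_ge_abs: "(real_of_int n)\<^sup>2 \<ge> \<bar>real_of_int n\<bar>"
proof -
  have "\<bar>n\<bar> \<le> n\<^sup>2"
    by (cases "n = 0") (auto simp: power2_eq_square abs_mult[symmetric] intro: self_le_power[of "\<bar>n\<bar>" 2, simplified])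
  hence "real_of_int \<bar>n\<bar> \<le> real_of_int (n\<^sup>2)" by linarith
  thus ?thesis by simp
qed

lemma phi_summable:
  fixes m s :: real and u1 u2 \<tau> :: complex
  assumes m: "m > 0" and t: "Im \<tau> > 0" and nz: "\<forall>n::int. 1 - ee u1 * ee (\<tau> * of_int n) \<noteq> 0"
  shows "(\<lambda>n::int. ee (of_real m * of_int n * (u1 + u2) + of_real s * u1)
        * ee (\<tau> * of_real (m * of_int n ^ 2 + s * of_int n))
        / (1 - ee u1 * ee (\<tau> * of_int n))) summable_on UNIV"
    (is "?f summable_on _")
proof -
  define a where "a = m * Im \<tau>"
  define b where "b = m*Im(u1+u2) + s*Im \<tau>"
  define c where "c = s * Im u1"
  define K where "K = exp(-2*pi*c + pi*b\<^sup>2/a)"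
  define r where "r = exp(-pi*a)"
  have a: "a > 0" using m t by (simp add: a_def)
  have r: "r < 1" "r \<ge> 0" using a by (auto simp: r_def)
  have K: "K \<ge> 0" by (simp add: K_def)
  have bnd: "norm (ee (of_real m * of_int n * (u1 + u2) + of_real s * u1)
        * ee (\<tau> * of_real (m * of_int n ^ 2 + s * of_int n))) \<le> K * exp(-pi*a*\<bar>real_of_int n\<bar>)" for n :: int
    unfolding num_norm a_def[symmetric] b_def[symmetric] c_def[symmetric] K_def
    by (rule gauss_bound[OF a int_sq_ge_abs])
  have fb: "norm (?f n) \<le> 2 * K * exp(-pi*a*\<bar>real_of_int n\<bar>)"
    if "norm (1 - ee u1 * ee (\<tau> * of_int n)) \<ge> 1/2" for n :: int
  proof -
    have "norm (?f n) = norm (ee (of_real m * of_int n * (u1 + u2) + of_real s * u1)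
        * ee (\<tau> * of_real (m * of_int n ^ 2 + s * of_int n))) / norm (1 - ee u1 * ee (\<tau> * of_int n))"
      by (simp add: norm_divide)
    also have "\<dots> \<le> (K * exp(-pi*a*\<bar>real_of_int n\<bar>)) / (1/2)"
      by (rule frac_le) (use bnd that K in auto)
    finally show ?thesis by simp
  qed
  have geo: "summable (\<lambda>k::nat. 2 * K * r ^ k)"
    using r by (intro summable_mult summable_geometric) auto
  have s1: "(?f \<circ> int) summable_on UNIV"
  proof (rule norm_summable_imp_summable_on)
    show "summable (\<lambda>k. norm ((?f \<circ> int) k))"
    proof (rule summable_comparison_test_ev[OF _ geo])
      show "eventually (\<lambda>k. norm (norm ((?f \<circ> int) k)) \<le> 2 * K * r ^ k) at_top"
        using denom_ev_pos[OF t, of u1]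
      proof eventually_elim
        case (elim k)
        have "exp(-pi*a*\<bar>real_of_int (int k)\<bar>) = r ^ k"
          by (simp add: r_def exp_of_nat_mult[symmetric] algebra_simps)
        thus ?case using fb[of "int k"] elim by simp
      qed
    qed
  qed
  have s2: "(?f \<circ> (\<lambda>k. - int (Suc k))) summable_on UNIV"
  proof (rule norm_summable_imp_summable_on)
    show "summable (\<lambda>k. norm ((?f \<circ> (\<lambda>k. - int (Suc k))) k))"
    proof (rule summable_comparison_test_ev[OF _ geo])
      show "eventually (\<lambda>k. norm (norm ((?f \<circ> (\<lambda>k. - int (Suc k))) k)) \<le> 2 * K * r ^ k) at_top"
        using denom_ev_neg[OF t, of u1]
      proof eventually_elim
        case (elim k)
        have "exp(-pi*a*\<bar>real_of_int (- int (Suc k))\<bar>) \<le> r ^ k"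
          using a by (simp add: r_def exp_of_nat_mult[symmetric] algebra_simps)
        hence "2 * K * exp(-pi*a*\<bar>real_of_int (- int (Suc k))\<bar>) \<le> 2 * K * r ^ k"
          using K by (simp add: mult_left_mono)
        thus ?case using fb[of "- int (Suc k)"] elim by simp
      qed
    qed
  qed
  have u1: "?f summable_on range int"
    using s1 by (subst summable_on_reindex) (auto simp: inj_on_def)
  have u2: "?f summable_on range (\<lambda>k. - int (Suc k))"
    using s2 by (subst summable_on_reindex) (auto simp: inj_on_def)
  have U: "range int \<union> range (\<lambda>k. - int (Suc k)) = UNIV"
  proof -
    have "n \<in> range int \<union> range (\<lambda>k. - int (Suc k))" for n :: int
    proof (cases "n \<ge> 0")
      case True
      hence "n = int (nat n)" by simp
      thus ?thesis by blast
    next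
      case False
      hence "n = - int (Suc (nat (- n - 1)))" by simp
      thus ?thesis by blast
    qed
    thus ?thesis by blast
  qed
  have "?f summable_on (range int \<union> range (\<lambda>k. - int (Suc k)))"
    by (rule summable_on_Un_disjoint[OF u1 u2]) auto
  thus ?thesis using U by simp
qed

lemma ee_half: "ee (1/2) = -1"
  unfolding ee_def by simp

lemma ee_int: "ee (of_int k) = 1"
  unfolding ee_def by (rule exp_2pi_int)

lemma frac_split:
  fixes N x :: complex assumes "1 - x*x \<noteq> 0"
  shows "2 * (N / (1 - x*x)) = N/(1-x) + N/(1-(-x))"
proof -
  have a: "1 - x \<noteq> 0" using assms by auto
  have b: "1 - (-x) \<noteq> 0" using assms by (auto simp: add_eq_0_iff)
  have c: "1 - x*x = (1 - x) * (1 - (-x))" by (simp add: algebra_simps)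
  show ?thesis unfolding c using a b by (simp add: field_simps)
qed

lemma phi_dup:
  fixes M s :: real and \<tau> z1 z2 :: complex
  assumes M: "M > 0" and t: "Im \<tau> > 0"
    and nz: "\<forall>n::int. ee z1 * ee (2 * \<tau> * of_int n) \<noteq> 1"
  shows "2 * PhiPlus M s (2 * \<tau>) z1 z2
       = PhiPlus (2 * M) (2 * s) \<tau> (z1 / 2) (z2 / 2)
         + exp (- 2 * complex_of_real pi * \<i> * of_real s)
           * PhiPlus (2 * M) (2 * s) \<tau> ((z1 + 1) / 2) ((z2 - 1) / 2)"
proof -
  define E where "E = exp (- 2 * complex_of_real pi * \<i> * of_real s)"
  define x where "x n = ee (z1/2) * ee (\<tau> * of_int n)" for n :: int
  define N where "N n = ee (of_real M * of_int n * (z1 + z2) + of_real s * z1)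
        * ee (2 * \<tau> * of_real (M * of_int n ^ 2 + s * of_int n))" for n :: int
  have E: "E = ee (- of_real s)" unfolding E_def ee_def by (simp add: algebra_simps)
  have xx: "x n * x n = ee z1 * ee (2 * \<tau> * of_int n)" for n
  proof -
    have "ee z1 = ee (z1/2) * ee (z1/2)" by (simp add: ee_add[symmetric])
    moreover have "ee (2 * \<tau> * of_int n) = ee (\<tau> * of_int n) * ee (\<tau> * of_int n)"
      by (simp add: ee_add[symmetric] algebra_simps)
    ultimately show ?thesis by (simp add: x_def algebra_simps)
  qed
  have nz': "1 - x n * x n \<noteq> 0" for n using nz xx by simp
  have xm: "ee ((z1 + 1) / 2) * ee (\<tau> * of_int n) = - x n" for n
  proof -
    have "ee ((z1 + 1) / 2) = ee (z1/2) * ee (1/2)" by (simp add: ee_add[symmetric] add_divide_distrib)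
    thus ?thesis by (simp add: ee_half x_def)
  qed
  have N1: "ee (of_real (2 * M) * of_int n * (z1 / 2 + z2 / 2) + of_real (2 * s) * (z1 / 2))
        * ee (\<tau> * of_real (2 * M * of_int n ^ 2 + 2 * s * of_int n)) = N n" for n
    unfolding N_def by (rule arg_cong2[where f="(*)"]; rule arg_cong[where f=ee]; simp add: algebra_simps)
  have N2: "E * (ee (of_real (2 * M) * of_int n * ((z1 + 1) / 2 + (z2 - 1) / 2) + of_real (2 * s) * ((z1 + 1) / 2))
        * ee (\<tau> * of_real (2 * M * of_int n ^ 2 + 2 * s * of_int n))) = N n" for n
  proof -
    have "E * ee (of_real (2 * M) * of_int n * ((z1 + 1) / 2 + (z2 - 1) / 2) + of_real (2 * s) * ((z1 + 1) / 2))
       = ee (of_real M * of_int n * (z1 + z2) + of_real s * z1)"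
      unfolding E ee_add[symmetric] by (rule arg_cong[where f=ee]) (simp add: field_simps)
    moreover have "ee (\<tau> * of_real (2 * M * of_int n ^ 2 + 2 * s * of_int n))
       = ee (2 * \<tau> * of_real (M * of_int n ^ 2 + s * of_int n))"
      by (rule arg_cong[where f=ee]) (simp add: algebra_simps)
    ultimately show ?thesis unfolding N_def by (simp add: mult.assoc)
  qed
  define b where "b n = ee (of_real (2 * M) * of_int n * (z1 / 2 + z2 / 2) + of_real (2 * s) * (z1 / 2))
        * ee (\<tau> * of_real (2 * M * of_int n ^ 2 + 2 * s * of_int n))
        / (1 - ee (z1 / 2) * ee (\<tau> * of_int n))" for n :: int
  define c where "c n = ee (of_real (2 * M) * of_int n * ((z1 + 1) / 2 + (z2 - 1) / 2) + of_real (2 * s) * ((z1 + 1) / 2))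
        * ee (\<tau> * of_real (2 * M * of_int n ^ 2 + 2 * s * of_int n))
        / (1 - ee ((z1 + 1) / 2) * ee (\<tau> * of_int n))" for n :: int
  have x1: "x n \<noteq> 1" "x n \<noteq> -1" for n using nz'[of n] by auto
  have nzb: "\<forall>n::int. 1 - ee (z1 / 2) * ee (\<tau> * of_int n) \<noteq> 0"
    using x1 by (auto simp: x_def)
  have nzc: "\<forall>n::int. 1 - ee ((z1 + 1) / 2) * ee (\<tau> * of_int n) \<noteq> 0"
  proof
    fix n :: int
    show "1 - ee ((z1 + 1) / 2) * ee (\<tau> * of_int n) \<noteq> 0" unfolding xm
      using x1(2)[of n] by (auto simp: add_eq_0_iff)
  qed
  have sb: "b summable_on UNIV" unfolding b_def
    by (rule phi_summable) (use M t nzb in auto)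
  have sc: "c summable_on UNIV" unfolding c_def
    by (rule phi_summable) (use M t nzc in auto)
  have trm: "2 * (ee (of_real M * of_int n * (z1 + z2) + of_real s * z1)
        * ee (2 * \<tau> * of_real (M * of_int n ^ 2 + s * of_int n))
        / (1 - ee z1 * ee (2 * \<tau> * of_int n))) = b n + E * c n" for n
  proof -
    have bn: "b n = N n / (1 - x n)" unfolding b_def N1 x_def ..
    have "E * c n = (E * (ee (of_real (2 * M) * of_int n * ((z1 + 1) / 2 + (z2 - 1) / 2) + of_real (2 * s) * ((z1 + 1) / 2))
        * ee (\<tau> * of_real (2 * M * of_int n ^ 2 + 2 * s * of_int n))))
        / (1 - ee ((z1 + 1) / 2) * ee (\<tau> * of_int n))" unfolding c_def by (rule times_divide_eq_right)
    hence cn: "E * c n = N n / (1 - (- x n))" unfolding N2 xm .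
    have an: "ee (of_real M * of_int n * (z1 + z2) + of_real s * z1)
        * ee (2 * \<tau> * of_real (M * of_int n ^ 2 + s * of_int n))
        / (1 - ee z1 * ee (2 * \<tau> * of_int n)) = N n / (1 - x n * x n)"
      unfolding N_def xx ..
    show ?thesis unfolding an bn cn by (rule frac_split[OF nz'])
  qed
  have "2 * PhiPlus M s (2 * \<tau>) z1 z2 = infsum (\<lambda>n. b n + E * c n) UNIV"
    unfolding PhiPlus_def infsum_cmult_right'[symmetric] by (simp only: trm)
  also have "\<dots> = infsum b UNIV + E * infsum c UNIV"
    by (subst infsum_add) (use sb sc summable_on_cmult_right in \<open>auto simp: infsum_cmult_right'\<close>)
  finally show ?thesis unfolding PhiPlus_def b_def c_def E_def .
qed


lemma theta_dup:
  assumes "M \<noteq> 0"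
  shows "ThetaPlus (2 * j) (2 * M) \<tau> \<zeta> = ThetaPlus j M (2 * \<tau>) (2 * \<zeta>)"
proof -
  have q: "2 * j / (2 * (2 * M)) = j / (2 * M)" using assms by simp
  show ?thesis unfolding ThetaPlus_def q
    by (rule infsum_cong) (simp add: algebra_simps)
qed

lemma psi_dup:
  assumes "M > 0"
  shows "psi_mn (2 * M) (2 * n) \<tau> w = psi_mn M n (2 * \<tau>) (2 * w)"
proof -
  have "sqrt (2 * Im \<tau> / M) = 2 * sqrt (Im \<tau> / (2 * M))"
  proof -
    have "2 * Im \<tau> / M = 4 * (Im \<tau> / (2 * M))" using assms by simp
    hence "sqrt (2 * Im \<tau> / M) = sqrt (4 * (Im \<tau> / (2 * M)))" by simp
    also have "\<dots> = 2 * sqrt (Im \<tau> / (2 * M))" by (simp only: real_sqrt_mult real_sqrt_four)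
    finally show ?thesis .
  qed
  thus ?thesis unfolding psi_mn_def using assms by (simp add: field_simps)
qed

lemma sgn_dup:
  fixes M :: real and k :: int
  assumes "2 * M \<ge> 1"
  shows "sgn (2 * (j + 2 * M * k) - 1/2 - 2 * j + 2 * (2 * M))
       = sgn ((j + 2 * M * k) - 1/2 - j + 2 * M)"
proof -
  define y where "y = 2 * M * (k + 1)"
  have e1: "2 * (j + 2 * M * k) - 1/2 - 2 * j + 2 * (2 * M) = 2 * y - 1/2"
    by (simp add: y_def algebra_simps)
  have e2: "(j + 2 * M * k) - 1/2 - j + 2 * M = y - 1/2"
    by (simp add: y_def algebra_simps)
  have "y \<ge> 1 \<or> y \<le> 0"
  proof (cases "k + 1 \<ge> 1")
    case True
    hence "real_of_int (k+1) \<ge> 1" by linarith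
    hence "2 * M * real_of_int (k+1) \<ge> 1 * 1" using assms by (intro mult_mono) auto
    thus ?thesis by (simp add: y_def)
  next
    case False
    hence "real_of_int (k+1) \<le> 0" by linarith
    hence "2 * M * real_of_int (k+1) \<le> 0" using assms by (simp add: mult_nonneg_nonpos)
    thus ?thesis by (simp add: y_def)
  qed
  thus ?thesis unfolding e1 e2 by (auto simp: sgn_if)
qed

lemma R_dup:
  fixes M j :: real and \<tau> w :: complex
  assumes M: "M > 0" "2 * M \<ge> 1"
  shows "RPlus (2 * j) (2 * M) \<tau> w = RPlus j M (2 * \<tau>) (2 * w)"
proof -
  define A where "A = {n::real. \<exists>k::int. n = j + 2 * M * of_int k}"
  have img: "{n::real. \<exists>k::int. n = 2 * j + 2 * (2 * M) * of_int k} = (\<lambda>n. 2 * n) ` A"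
  proof (intro set_eqI iffI)
    fix x assume "x \<in> {n::real. \<exists>k::int. n = 2 * j + 2 * (2 * M) * of_int k}"
    then obtain k :: int where "x = 2 * j + 2 * (2 * M) * real_of_int k" by blast
    hence "x = 2 * (j + 2 * M * of_int k)" by (simp add: algebra_simps)
    thus "x \<in> (\<lambda>n. 2 * n) ` A" unfolding A_def by blast
  next
    fix x assume "x \<in> (\<lambda>n. 2 * n) ` A"
    then obtain n where "n \<in> A" "x = 2 * n" by blast
    then obtain k :: int where "n = j + 2 * M * k" "x = 2 * n" unfolding A_def by blast
    hence "x = 2 * j + 2 * (2 * M) * of_int k" by (simp add: algebra_simps)
    thus "x \<in> {n::real. \<exists>k::int. n = 2 * j + 2 * (2 * M) * of_int k}" by blast
  qed
  have inj: "inj_on (\<lambda>n::real. 2 * n) A" by (auto simp: inj_on_def)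
  show ?thesis
    unfolding RPlus_def img infsum_reindex[OF inj] A_def[symmetric]
  proof (rule infsum_cong)
    fix n assume "n \<in> A"
    then obtain k :: int where n: "n = j + 2 * M * k" unfolding A_def by blast
    have s: "sgn (2 * n - 1/2 - 2 * j + 2 * (2 * M)) = sgn (n - 1/2 - j + 2 * M)"
      unfolding n by (rule sgn_dup[OF M(2)])
    have p: "psi_mn (2 * M) (2 * n) \<tau> w = psi_mn M n (2 * \<tau>) (2 * w)"
      by (rule psi_dup[OF M(1)])
    have ex: "- complex_of_real pi * \<i> * of_real ((2 * n)\<^sup>2) * \<tau> / of_real (2 * (2 * M))
               + 2 * complex_of_real pi * \<i> * of_real (2 * n) * w
        = - complex_of_real pi * \<i> * of_real (n\<^sup>2) * (2 * \<tau>) / of_real (2 * M)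
               + 2 * complex_of_real pi * \<i> * of_real n * (2 * w)"
      using M by (simp add: field_simps power2_eq_square)
    show "((\<lambda>n. complex_of_real (sgn (n - 1 / 2 - 2 * j + 2 * (2 * M)) - Erf_E (psi_mn (2 * M) n \<tau> w)) *
            exp (- complex_of_real pi * \<i> * complex_of_real (n\<^sup>2) * \<tau> / complex_of_real (2 * (2 * M)) +
                 2 * complex_of_real pi * \<i> * complex_of_real n * w)) \<circ> (\<lambda>n. 2 * n)) n =
         complex_of_real (sgn (n - 1 / 2 - j + 2 * M) - Erf_E (psi_mn M n (2 * \<tau>) (2 * w))) *
         exp (- complex_of_real pi * \<i> * complex_of_real (n\<^sup>2) * (2 * \<tau>) / complex_of_real (2 * M) +
              2 * complex_of_real pi * \<i> * complex_of_real n * (2 * w))"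
      unfolding o_def s p ex by simp
  qed
qed

lemma R_shift:
  fixes m j :: real and \<tau> w :: complex
  assumes m: "m \<in> \<int>"
  shows "RPlus j m \<tau> (w + 1/2) = exp (complex_of_real pi * \<i> * of_real j) * RPlus j m \<tau> w"
  unfolding RPlus_def infsum_cmult_right'[symmetric]
proof (rule infsum_cong)
  fix n assume "n \<in> {n::real. \<exists>k::int. n = j + 2 * m * of_int k}"
  then obtain k :: int where n: "n = j + 2 * m * k" by blast
  obtain mm :: int where mm: "m = of_int mm" using m Ints_cases by blast
  have psi: "psi_mn m n \<tau> (w + 1/2) = psi_mn m n \<tau> w" unfolding psi_mn_def by simp
  have e1: "exp (2 * complex_of_real pi * \<i> * of_int (mm * k)) = 1"
    by (rule exp_2pi_int)
  have "exp (- complex_of_real pi * \<i> * of_real (n\<^sup>2) * \<tau> / of_real (2 * m)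
               + 2 * complex_of_real pi * \<i> * of_real n * (w + 1/2))
      = exp (- complex_of_real pi * \<i> * of_real (n\<^sup>2) * \<tau> / of_real (2 * m)
               + 2 * complex_of_real pi * \<i> * of_real n * w)
        * exp (complex_of_real pi * \<i> * of_real j) * exp (2 * complex_of_real pi * \<i> * of_int (mm * k))"
    unfolding exp_add[symmetric] by (rule arg_cong[where f=exp]) (simp add: n mm algebra_simps)
  thus "complex_of_real (sgn (n - 1 / 2 - j + 2 * m) - Erf_E (psi_mn m n \<tau> (w + 1 / 2))) *
         exp (- complex_of_real pi * \<i> * complex_of_real (n\<^sup>2) * \<tau> / complex_of_real (2 * m) +
              2 * complex_of_real pi * \<i> * complex_of_real n * (w + 1 / 2)) =
         exp (complex_of_real pi * \<i> * complex_of_real j) *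
         (complex_of_real (sgn (n - 1 / 2 - j + 2 * m) - Erf_E (psi_mn m n \<tau> w)) *
          exp (- complex_of_real pi * \<i> * complex_of_real (n\<^sup>2) * \<tau> / complex_of_real (2 * m) +
               2 * complex_of_real pi * \<i> * complex_of_real n * w))"
    unfolding psi e1 by simp
qed

definition SRT :: "real \<Rightarrow> real \<Rightarrow> complex \<Rightarrow> complex \<Rightarrow> complex \<Rightarrow> complex" where
  "SRT m s \<tau> z1 z2 = (\<Sum>j\<in>{j::real. (\<exists>k::int. j = s + of_int k) \<and> s \<le> j \<and> j < s + 2 * m}.
               RPlus j m \<tau> ((z1 - z2) / 2) * ThetaPlus j m \<tau> (z1 + z2))"

lemma PhiPlusTilde_SRT: "PhiPlusTilde m s \<tau> z1 z2 = PhiPlus m s \<tau> z1 z2 - 1/2 * SRT m s \<tau> z1 z2"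
  unfolding PhiPlusTilde_def SRT_def ..

lemma Jset:
  fixes s m :: real and N :: nat assumes "2 * m = real N"
  shows "{j::real. (\<exists>k::int. j = s + of_int k) \<and> s \<le> j \<and> j < s + 2 * m} = (\<lambda>l. s + real l) ` {..<N}"
proof (intro set_eqI iffI)
  fix j assume "j \<in> {j::real. (\<exists>k::int. j = s + of_int k) \<and> s \<le> j \<and> j < s + 2 * m}"
  then obtain k :: int where k: "j = s + k" "s \<le> j" "j < s + 2 * m" by blast
  have "k \<ge> 0" "k < int N" using k assms by auto
  hence "j = s + real (nat k)" "nat k < N" using k by auto
  thus "j \<in> (\<lambda>l. s + real l) ` {..<N}" by blast
next
  fix j assume "j \<in> (\<lambda>l. s + real l) ` {..<N}"
  then obtain l where l: "l < N" "j = s + real l" by blast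
  hence "j = s + of_int (int l)" by simp
  moreover have "s \<le> j \<and> j < s + 2 * m" using l assms by auto
  ultimately show "j \<in> {j::real. (\<exists>k::int. j = s + of_int k) \<and> s \<le> j \<and> j < s + 2 * m}"
    by blast
qed

lemma SRT_nat:
  assumes "2 * m = real N"
  shows "SRT m s \<tau> z1 z2 = (\<Sum>l<N. RPlus (s + real l) m \<tau> ((z1 - z2) / 2) * ThetaPlus (s + real l) m \<tau> (z1 + z2))"
  unfolding SRT_def Jset[OF assms] by (subst sum.reindex) (auto simp: inj_on_def)

lemma sum_even_odd:
  fixes g :: "nat \<Rightarrow> complex"
  shows "(\<Sum>l<2*N. (1 + (-1)^l) * g l) = (\<Sum>l<N. 2 * g (2*l))"
proof (induction N)
  case 0 then show ?case by simp
next
  case (Suc N)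
  have "2 * Suc N = Suc (Suc (2 * N))" by simp
  then show ?case using Suc by simp
qed

lemma sign_factor:
  fixes s :: real and l :: nat
  shows "exp (- 2 * complex_of_real pi * \<i> * of_real s) * exp (complex_of_real pi * \<i> * of_real (2 * s + real l)) = (-1)^l"
proof -
  have "exp (- 2 * complex_of_real pi * \<i> * of_real s) * exp (complex_of_real pi * \<i> * of_real (2 * s + real l))
      = exp (of_nat l * (complex_of_real pi * \<i>))"
    unfolding exp_add[symmetric] by (rule arg_cong[where f=exp]) (simp add: algebra_simps)
  also have "\<dots> = (-1)^l" unfolding exp_of_nat_mult by simp
  finally show ?thesis .
qed

lemma srt_dup:
  fixes M s :: real and \<tau> z1 z2 :: complex and N :: nat
  assumes M: "M > 0" and N: "2 * M = real N"
  shows "2 * SRT M s (2 * \<tau>) z1 z2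
       = SRT (2 * M) (2 * s) \<tau> (z1 / 2) (z2 / 2)
         + exp (- 2 * complex_of_real pi * \<i> * of_real s) * SRT (2 * M) (2 * s) \<tau> ((z1 + 1) / 2) ((z2 - 1) / 2)"
proof -
  define E where "E = exp (- 2 * complex_of_real pi * \<i> * of_real s)"
  define w where "w = (z1 / 2 - z2 / 2) / 2"
  define \<zeta> where "\<zeta> = z1 / 2 + z2 / 2"
  define g where "g l = RPlus (2 * s + real l) (2 * M) \<tau> w * ThetaPlus (2 * s + real l) (2 * M) \<tau> \<zeta>" for l :: nat
  have N2: "2 * (2 * M) = real (2 * N)" using N by simp
  have M1: "2 * M \<ge> 1" using N M by (cases N) auto
  have MZ: "2 * M \<in> \<int>" using N by simp
  have S1: "SRT (2 * M) (2 * s) \<tau> (z1 / 2) (z2 / 2) = (\<Sum>l<2*N. g l)"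
    unfolding SRT_nat[OF N2] g_def w_def \<zeta>_def ..
  have w2: "((z1 + 1) / 2 - (z2 - 1) / 2) / 2 = w + 1/2" unfolding w_def by (simp add: field_simps)
  have z2: "(z1 + 1) / 2 + (z2 - 1) / 2 = \<zeta>" unfolding \<zeta>_def by (simp add: field_simps)
  have S2: "E * SRT (2 * M) (2 * s) \<tau> ((z1 + 1) / 2) ((z2 - 1) / 2) = (\<Sum>l<2*N. (-1)^l * g l)"
    unfolding SRT_nat[OF N2] w2 z2 R_shift[OF MZ] sum_distrib_left
    by (rule sum.cong) (simp_all add: g_def sign_factor[of s, folded E_def, symmetric] mult.assoc)
  have G: "g (2 * l) = RPlus (s + real l) M (2 * \<tau>) ((z1 - z2) / 2) * ThetaPlus (s + real l) M (2 * \<tau>) (z1 + z2)" for l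
  proof -
    have e: "2 * s + real (2 * l) = 2 * (s + real l)" by simp
    have q: "2 * w = (z1 - z2) / 2" "2 * \<zeta> = z1 + z2" unfolding w_def \<zeta>_def by (simp_all add: field_simps)
    have "g (2 * l) = RPlus (2 * (s + real l)) (2 * M) \<tau> w * ThetaPlus (2 * (s + real l)) (2 * M) \<tau> \<zeta>"
      unfolding g_def e ..
    also have "\<dots> = RPlus (s + real l) M (2 * \<tau>) (2 * w) * ThetaPlus (s + real l) M (2 * \<tau>) (2 * \<zeta>)"
      using M by (simp only: R_dup[OF M M1] theta_dup)
    finally show ?thesis unfolding q .
  qed
  have "SRT (2 * M) (2 * s) \<tau> (z1 / 2) (z2 / 2) + E * SRT (2 * M) (2 * s) \<tau> ((z1 + 1) / 2) ((z2 - 1) / 2)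
      = (\<Sum>l<2*N. (1 + (-1)^l) * g l)" unfolding S1 S2 sum.distrib[symmetric] by (simp add: algebra_simps)
  also have "\<dots> = (\<Sum>l<N. 2 * g (2*l))" by (rule sum_even_odd)
  also have "\<dots> = 2 * SRT M s (2 * \<tau>) z1 z2" unfolding SRT_nat[OF N] G sum_distrib_left ..
  finally show ?thesis unfolding E_def by simp
qed


lemma tilde_dup:
  fixes M s :: real and \<tau> z1 z2 :: complex and N :: nat
  assumes M: "M > 0" and N: "2 * M = real N" and t: "Im \<tau> > 0"
    and nz: "\<forall>n::int. ee z1 * ee (2 * \<tau> * of_int n) \<noteq> 1"
  shows "2 * PhiPlusTilde M s (2 * \<tau>) z1 z2
       = PhiPlusTilde (2 * M) (2 * s) \<tau> (z1 / 2) (z2 / 2)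
         + exp (- 2 * complex_of_real pi * \<i> * of_real s) * PhiPlusTilde (2 * M) (2 * s) \<tau> ((z1 + 1) / 2) ((z2 - 1) / 2)"
proof -
  define E where "E = exp (- 2 * complex_of_real pi * \<i> * of_real s)"
  have p: "2 * PhiPlus M s (2 * \<tau>) z1 z2 = PhiPlus (2 * M) (2 * s) \<tau> (z1 / 2) (z2 / 2)
         + E * PhiPlus (2 * M) (2 * s) \<tau> ((z1 + 1) / 2) ((z2 - 1) / 2)"
    unfolding E_def by (rule phi_dup[OF M t nz])
  have r: "2 * SRT M s (2 * \<tau>) z1 z2 = SRT (2 * M) (2 * s) \<tau> (z1 / 2) (z2 / 2)
         + E * SRT (2 * M) (2 * s) \<tau> ((z1 + 1) / 2) ((z2 - 1) / 2)"
    unfolding E_def by (rule srt_dup[OF M N])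
  have "2 * PhiPlusTilde M s (2 * \<tau>) z1 z2 = 2 * PhiPlus M s (2 * \<tau>) z1 z2 - 1/2 * (2 * SRT M s (2 * \<tau>) z1 z2)"
    unfolding PhiPlusTilde_SRT by (simp add: algebra_simps)
  also have "\<dots> = PhiPlusTilde (2 * M) (2 * s) \<tau> (z1 / 2) (z2 / 2)
         + E * PhiPlusTilde (2 * M) (2 * s) \<tau> ((z1 + 1) / 2) ((z2 - 1) / 2)"
    unfolding p r PhiPlusTilde_SRT by (simp add: algebra_simps)
  finally show ?thesis unfolding E_def .
qed

theorem lemma6p19:
  fixes M s :: real and \<tau> z1 z2 t :: complex
  assumes "M > 0" and "2 * M \<in> \<int>" and "2 * s \<in> \<int>"
    and "Im \<tau> > 0"
    and "\<forall>n::int. ee z1 * ee (2 * \<tau> * of_int n) \<noteq> 1"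
    and "\<forall>n::int. ee (- z2) * ee (2 * \<tau> * of_int n) \<noteq> 1"
  shows "2 * PsiTilde M s (2 * \<tau>) z1 z2 t
       = PsiTilde (2 * M) (2 * s) \<tau> (z1 / 2) (z2 / 2) (t / 2)
         + exp (- 2 * complex_of_real pi * \<i> * of_real s)
           * PsiTilde (2 * M) (2 * s) \<tau> ((z1 + 1) / 2) ((z2 - 1) / 2) (t / 2)"
proof -
  obtain k :: int where k: "2 * M = of_int k" using assms(2) Ints_cases by blast
  define N where "N = nat k"
  have N: "2 * M = real N" using k assms(1) unfolding N_def by simp
  define E where "E = exp (- 2 * complex_of_real pi * \<i> * of_real s)"
  define X where "X = exp (- 2 * complex_of_real pi * \<i> * of_real M * t)"
  have X: "exp (- 2 * complex_of_real pi * \<i> * of_real (2 * M) * (t / 2)) = X"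
    unfolding X_def by (rule arg_cong[where f=exp]) (simp add: field_simps)
  have A: "2 * PhiPlusTilde M s (2 * \<tau>) z1 z2
       = PhiPlusTilde (2 * M) (2 * s) \<tau> (z1 / 2) (z2 / 2)
         + E * PhiPlusTilde (2 * M) (2 * s) \<tau> ((z1 + 1) / 2) ((z2 - 1) / 2)"
    unfolding E_def by (rule tilde_dup[OF assms(1) N assms(4) assms(5)])
  have B0: "2 * PhiPlusTilde M s (2 * \<tau>) (- z2) (- z1)
       = PhiPlusTilde (2 * M) (2 * s) \<tau> ((- z2) / 2) ((- z1) / 2)
         + E * PhiPlusTilde (2 * M) (2 * s) \<tau> ((- z2 + 1) / 2) ((- z1 - 1) / 2)"
    unfolding E_def by (rule tilde_dup[OF assms(1) N assms(4) assms(6)])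
  have q: "(- z2) / 2 = - (z2 / 2)" "(- z1) / 2 = - (z1 / 2)"
    "(- z2 + 1) / 2 = - ((z2 - 1) / 2)" "(- z1 - 1) / 2 = - ((z1 + 1) / 2)"
    by (simp_all add: field_simps)
  have B: "2 * PhiPlusTilde M s (2 * \<tau>) (- z2) (- z1)
       = PhiPlusTilde (2 * M) (2 * s) \<tau> (- (z2 / 2)) (- (z1 / 2))
         + E * PhiPlusTilde (2 * M) (2 * s) \<tau> (- ((z2 - 1) / 2)) (- ((z1 + 1) / 2))"
    using B0 unfolding q .
  have "2 * PsiTilde M s (2 * \<tau>) z1 z2 t
      = X * (2 * PhiPlusTilde M s (2 * \<tau>) z1 z2 - 2 * PhiPlusTilde M s (2 * \<tau>) (- z2) (- z1))"
    unfolding PsiTilde_def X_def by (simp add: algebra_simps)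
  also have "\<dots> = PsiTilde (2 * M) (2 * s) \<tau> (z1 / 2) (z2 / 2) (t / 2)
         + E * PsiTilde (2 * M) (2 * s) \<tau> ((z1 + 1) / 2) ((z2 - 1) / 2) (t / 2)"
    unfolding A B PsiTilde_def X by (simp add: algebra_simps)
  finally show ?thesis unfolding E_def .
qed

end
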